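(* Let $D$ be a weighted digraph and let $\nu$ be the number of vertices of a longest directed path in $D$. If $\nu$ is odd, then $\mathrm{mac}(D)\ge\left(\frac14+\frac{1}{4\nu}\right)w(D)$; if $\nu$ is even, then $\mathrm{mac}(D)\ge\left(\frac14+\frac{1}{4(\nu-1)}\right)w(D)$.
   Context: A weighted digraph $D=(V,A,w)$ is a digraph without loops or parallel arcs (opposite arcs allowed) with weights $w:A\to\mathbb{R}_{\ge0}$; $w(D)$ is the total arc weight. For a partition $(X,Y)$ of $V$, $w(X,Y)$ is the total weight of arcs from $X$ to $Y$, and $\mathrm{mac}(D)=\max_{(X,Y)}w(X,Y)$ over all partitions. *)

theory Defs
  imports Complex_Main
begin

text \<open>A weighted digraph is given by a finite vertex set V, an arc set A \<subseteq> V \<times> V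
  without loops (A is a set of ordered pairs, so there are no parallel arcs, while
  opposite arcs are allowed), and a nonnegative weight function w on arcs.\<close>

definition weighted_digraph :: "'a set \<Rightarrow> ('a \<times> 'a) set \<Rightarrow> ('a \<times> 'a \<Rightarrow> real) \<Rightarrow> bool" where
  "weighted_digraph V A w \<longleftrightarrow> finite V \<and> A \<subseteq> V \<times> V \<and> (\<forall>v. (v, v) \<notin> A)
     \<and> (\<forall>a\<in>A. w a \<ge> 0)"

definition total_weight :: "('a \<times> 'a) set \<Rightarrow> ('a \<times> 'a \<Rightarrow> real) \<Rightarrow> real" where
  "total_weight A w = (\<Sum>a\<in>A. w a)"

definition cut_weight :: "('a \<times> 'a) set \<Rightarrow> ('a \<times> 'a \<Rightarrow> real) \<Rightarrow> 'a set \<Rightarrow> 'a set \<Rightarrow> real" where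
  "cut_weight A w X Y = (\<Sum>a\<in>{(x, y)\<in>A. x \<in> X \<and> y \<in> Y}. w a)"

definition mac :: "'a set \<Rightarrow> ('a \<times> 'a) set \<Rightarrow> ('a \<times> 'a \<Rightarrow> real) \<Rightarrow> real" where
  "mac V A w = Max ((\<lambda>X. cut_weight A w X (V - X)) ` Pow V)"

definition dipath :: "'a set \<Rightarrow> ('a \<times> 'a) set \<Rightarrow> 'a list \<Rightarrow> bool" where
  "dipath V A p \<longleftrightarrow> p \<noteq> [] \<and> distinct p \<and> set p \<subseteq> V
     \<and> (\<forall>i. Suc i < length p \<longrightarrow> (p ! i, p ! Suc i) \<in> A)"

definition longest_path_order :: "'a set \<Rightarrow> ('a \<times> 'a) set \<Rightarrow> nat" where
  "longest_path_order V A = Max (length ` {p. dipath V A p})"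

end

theory Submission
  imports Defs
begin

lemma count_subsets:
  assumes "finite K" "a \<in> K" "b \<in> K" "a \<noteq> b" "s \<ge> 1"
  shows "card {S. S \<subseteq> K \<and> card S = s \<and> a \<in> S \<and> b \<notin> S} = (card K - 2) choose (s - 1)"
proof -
  let ?T = "{T. T \<subseteq> K - {a,b} \<and> card T = s - 1}"
  have eq: "{S. S \<subseteq> K \<and> card S = s \<and> a \<in> S \<and> b \<notin> S} = insert a ` ?T"
  proof
    show "{S. S \<subseteq> K \<and> card S = s \<and> a \<in> S \<and> b \<notin> S} \<subseteq> insert a ` ?T"
    proof
      fix S assume S: "S \<in> {S. S \<subseteq> K \<and> card S = s \<and> a \<in> S \<and> b \<notin> S}"
      have fS: "finite S" using S assms(1) finite_subset by blast
      have "S = insert a (S - {a})" using S by auto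
      moreover have "S - {a} \<in> ?T" using S fS by auto
      ultimately show "S \<in> insert a ` ?T" by blast
    qed
  next
    show "insert a ` ?T \<subseteq> {S. S \<subseteq> K \<and> card S = s \<and> a \<in> S \<and> b \<notin> S}"
    proof
      fix S assume "S \<in> insert a ` ?T"
      then obtain T where T: "T \<in> ?T" "S = insert a T" by blast
      have fT: "finite T" using T assms(1) finite_subset by blast
      have "a \<notin> T" using T by auto
      hence "card S = Suc (s - 1)" using T fT by simp
      hence "card S = s" using assms(5) by simp
      thus "S \<in> {S. S \<subseteq> K \<and> card S = s \<and> a \<in> S \<and> b \<notin> S}" using T assms by auto
    qed
  qed
  have inj: "inj_on (insert a) ?T"
  proof (rule inj_onI)
    fix X Y assume X: "X \<in> ?T" and Y: "Y \<in> ?T" and e: "insert a X = insert a Y"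
    have "a \<notin> X" "a \<notin> Y" using X Y by auto
    thus "X = Y" using e by (metis Diff_insert_absorb)
  qed
  have "card (insert a ` ?T) = card ?T" using inj by (rule card_image)
  also have "\<dots> = card (K - {a,b}) choose (s - 1)" using assms(1) by (simp add: n_subsets)
  also have "card (K - {a,b}) = card K - 2" using assms by (simp add: card_Diff_subset)
  finally show ?thesis using eq by simp
qed


lemma avg:
  fixes w :: "'b \<Rightarrow> real" and f g :: "'b \<Rightarrow> 'c"
  assumes fE: "finite E" and fK: "finite K"
    and col: "\<And>e. e \<in> E \<Longrightarrow> f e \<in> K \<and> g e \<in> K \<and> f e \<noteq> g e" and s1: "s \<ge> 1"
    and bound: "\<And>S. S \<subseteq> K \<Longrightarrow> card S = s \<Longrightarrow>
       (\<Sum>e\<in>E. if f e \<in> S \<and> g e \<notin> S then w e else 0) \<le> M"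
  shows "real ((card K - 2) choose (s-1)) * (\<Sum>e\<in>E. w e) \<le> real ((card K) choose s) * M"
proof -
  let ?S = "{S. S \<subseteq> K \<and> card S = s}"
  have fS: "finite ?S" by (rule finite_subset[of _ "Pow K"]) (use fK in auto)
  have cS: "card ?S = card K choose s" using fK by (rule n_subsets)
  have "(\<Sum>S\<in>?S. \<Sum>e\<in>E. if f e \<in> S \<and> g e \<notin> S then w e else 0) \<le> of_nat (card ?S) * M"
    by (rule sum_bounded_above) (use bound in auto)
  moreover have "(\<Sum>S\<in>?S. \<Sum>e\<in>E. if f e \<in> S \<and> g e \<notin> S then w e else 0)
     = (\<Sum>e\<in>E. \<Sum>S\<in>?S. if f e \<in> S \<and> g e \<notin> S then w e else 0)"
    by (rule sum.swap)
  moreover have "\<And>e. e \<in> E \<Longrightarrow> (\<Sum>S\<in>?S. if f e \<in> S \<and> g e \<notin> S then w e else 0)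
      = w e * real ((card K - 2) choose (s-1))"
  proof -
    fix e assume e: "e \<in> E"
    have "(\<Sum>S\<in>?S. if f e \<in> S \<and> g e \<notin> S then w e else 0)
        = (\<Sum>S\<in>{S\<in>?S. f e \<in> S \<and> g e \<notin> S}. w e)"
      by (simp only: sum.inter_filter[OF fS])
    also have "\<dots> = w e * real (card {S\<in>?S. f e \<in> S \<and> g e \<notin> S})" by simp
    also have "{S\<in>?S. f e \<in> S \<and> g e \<notin> S} = {S. S \<subseteq> K \<and> card S = s \<and> f e \<in> S \<and> g e \<notin> S}"
      by auto
    also have "card \<dots> = (card K - 2) choose (s - 1)"
      using count_subsets[OF fK _ _ _ s1] col[OF e] by blast
    finally show "(\<Sum>S\<in>?S. if f e \<in> S \<and> g e \<notin> S then w e else 0)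
      = w e * real ((card K - 2) choose (s-1))" .
  qed
  hence "(\<Sum>e\<in>E. \<Sum>S\<in>?S. if f e \<in> S \<and> g e \<notin> S then w e else 0)
      = (\<Sum>e\<in>E. w e * real ((card K - 2) choose (s-1)))" by (rule sum.cong[OF refl])
  ultimately show ?thesis using cS by (simp add: sum_distrib_right mult.commute)
qed

lemma binom_id:
  assumes "1 \<le> s" "s < k"
  shows "((k - 2) choose (s - 1)) * k * (k - 1) = (k choose s) * s * (k - s)"
proof -
  define m where "m = k - 2"
  define t where "t = s - 1"
  have k: "k = Suc (Suc m)" using assms unfolding m_def by simp
  have s: "s = Suc t" using assms unfolding t_def by simp
  have t: "t \<le> m" using assms k s by simp
  have a: "(k choose s) * s = k * (Suc m choose t)" unfolding k s
    using Suc_times_binomial[of t "Suc m"] by (simp add: mult.commute)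
  have b: "(Suc m - t) * (Suc m choose t) = Suc m * (m choose t)"
    using binomial_absorb_comp[of "Suc m" t] by simp
  have ks: "k - s = Suc m - t" using k s by simp
  have "(k choose s) * s * (k - s) = k * (Suc m choose t) * (Suc m - t)" by (simp only: a ks)
  also have "\<dots> = k * ((Suc m - t) * (Suc m choose t))" by (simp only: ac_simps)
  also have "\<dots> = k * (Suc m * (m choose t))" using b by simp
  finally have X: "(k choose s) * s * (k - s) = k * (Suc m * (m choose t))" .
  have e1: "k - 2 = m" "s - 1 = t" "k - 1 = Suc m" using k s by simp_all
  show ?thesis unfolding X e1 by (simp only: ac_simps)
qed


lemma finite_dipaths: "finite V \<Longrightarrow> finite {p. dipath V R p}"
  by (rule finite_subset[OF _ finite_subset_distinct[of V]]) (auto simp: dipath_def)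

lemma dipath_mono: "dipath V B p \<Longrightarrow> B \<subseteq> A \<Longrightarrow> dipath V A p"
  unfolding dipath_def by blast

lemma dipath_trancl:
  assumes "dipath V B p" "i < j" "j < length p"
  shows "(p ! i, p ! j) \<in> B\<^sup>+"
  using assms(2,3)
proof (induction j)
  case 0 then show ?case by simp
next
  case (Suc j)
  have e: "(p ! j, p ! Suc j) \<in> B" using assms(1) Suc.prems unfolding dipath_def by blast
  show ?case
  proof (cases "i = j")
    case True then show ?thesis using e by auto
  next
    case False
    hence "(p ! i, p ! j) \<in> B\<^sup>+" using Suc by simp
    then show ?thesis using e by (meson trancl.trancl_into_trancl)
  qed
qed

lemma coloring:
  assumes wd: "weighted_digraph V A w"
  shows "\<exists>c. (\<forall>v\<in>V. c v \<in> {1..longest_path_order V A}) \<and> (\<forall>(u,v)\<in>A. c u \<noteq> c v)"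
proof -
  have fV: "finite V" and AV: "A \<subseteq> V \<times> V" and irr: "\<And>v. (v,v) \<notin> A"
    using wd unfolding weighted_digraph_def by auto
  have fA: "finite A" using fV AV finite_subset by blast
  have "finite {B. B \<subseteq> A \<and> acyclic B}" using fA by simp
  moreover have "{} \<in> {B. B \<subseteq> A \<and> acyclic B}" by (auto simp: acyclic_def)
  ultimately have "\<exists>m\<in>{B. B \<subseteq> A \<and> acyclic B}. \<forall>b\<in>{B. B \<subseteq> A \<and> acyclic B}. m \<le> b \<longrightarrow> m = b"
    by (intro finite_has_maximal) auto
  then obtain B where B: "B \<subseteq> A" "acyclic B"
     and Bmax: "\<And>B'. B' \<subseteq> A \<Longrightarrow> acyclic B' \<Longrightarrow> B \<subseteq> B' \<Longrightarrow> B = B'"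
    by auto
  have both: "(u,v) \<in> B\<^sup>+ \<or> (v,u) \<in> B\<^sup>+" if uv: "(u,v) \<in> A" for u v
  proof (cases "(u,v) \<in> B")
    case True then show ?thesis by auto
  next
    case False
    have "\<not> acyclic (insert (u,v) B)"
    proof
      assume "acyclic (insert (u,v) B)"
      hence "B = insert (u,v) B" using Bmax[of "insert (u,v) B"] B uv by auto
      thus False using False by auto
    qed
    hence "(v,u) \<in> B\<^sup>*" using B(2) by simp
    moreover have "u \<noteq> v" using irr uv by auto
    ultimately show ?thesis by (auto simp: rtrancl_eq_or_trancl)
  qed
  define \<nu> where "\<nu> = longest_path_order V A"
  define P where "P v = {p. dipath V B p \<and> last p = v}" for v
  define c where "c v = Max (length ` P v)" for v
  have fP: "finite (P v)" for v
    unfolding P_def by (rule finite_subset[OF _ finite_dipaths[OF fV, of B]]) auto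
  have PV: "v \<in> V \<Longrightarrow> [v] \<in> P v" for v unfolding P_def dipath_def by auto
  have cge: "p \<in> P v \<Longrightarrow> length p \<le> c v" for p v
    unfolding c_def using fP by auto
  have cin: "v \<in> V \<Longrightarrow> \<exists>p\<in>P v. length p = c v" for v
    unfolding c_def using fP PV
    by (metis (no_types, lifting) Max_in empty_iff finite_imageI image_iff image_is_empty)
  have cle: "v \<in> V \<Longrightarrow> c v \<le> \<nu>" for v
  proof -
    assume v: "v \<in> V"
    obtain p where p: "p \<in> P v" "length p = c v" using cin[OF v] by blast
    have "dipath V A p" using p B(1) dipath_mono unfolding P_def by blast
    hence "length p \<in> length ` {p. dipath V A p}" by blast
    thus ?thesis using p finite_dipaths[OF fV, of A] unfolding \<nu>_def longest_path_order_def
      by (metis Max_ge finite_imageI)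
  qed
  have step: "c x < c y" if xy: "(x,y) \<in> B" for x y
  proof -
    have x: "x \<in> V" and y: "y \<in> V" using xy B(1) AV by auto
    obtain p where p: "p \<in> P x" "length p = c x" using cin[OF x] by blast
    have dp: "dipath V B p" and lp: "last p = x" using p unfolding P_def by auto
    have ny: "y \<notin> set p"
    proof
      assume "y \<in> set p"
      then obtain i where i: "i < length p" "p ! i = y" by (meson in_set_conv_nth)
      have ne: "p \<noteq> []" using dp unfolding dipath_def by auto
      have lx: "p ! (length p - 1) = x" using lp ne by (simp add: last_conv_nth)
      show False
      proof (cases "i = length p - 1")
        case True
        hence "x = y" using i lx by simp
        thus False using xy B(2) unfolding acyclic_def by auto
      next
        case False
        hence "(y, x) \<in> B\<^sup>+" using dipath_trancl[OF dp, of i "length p - 1"] i lx by simp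
        hence "(x, x) \<in> B\<^sup>+" using xy by (meson trancl_into_trancl2)
        thus False using B(2) unfolding acyclic_def by auto
      qed
    qed
    have "dipath V B (p @ [y])"
      using dp ny y xy lp unfolding dipath_def
      by (auto simp: nth_append nth_Cons' last_conv_nth less_Suc_eq) (metis Suc_diff_1 diff_Suc_Suc diff_zero length_greater_0_conv)
    hence "p @ [y] \<in> P y" unfolding P_def by simp
    hence "length (p @ [y]) \<le> c y" by (rule cge)
    thus ?thesis using p by simp
  qed
  have tr: "(x,y) \<in> B\<^sup>+ \<Longrightarrow> c x < c y" for x y
    by (induction rule: trancl.induct) (use step less_trans in blast)+
  have "\<forall>v\<in>V. c v \<in> {1..\<nu>}"
  proof
    fix v assume v: "v \<in> V"
    have "1 \<le> c v" using cge[OF PV[OF v]] by simp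
    thus "c v \<in> {1..\<nu>}" using cle[OF v] by simp
  qed
  moreover have "\<forall>(u,v)\<in>A. c u \<noteq> c v"
    using both tr by (fastforce)
  ultimately show ?thesis unfolding \<nu>_def by blast
qed


lemma mac_ge:
  assumes wd: "weighted_digraph V A w" and X: "X \<subseteq> V"
  shows "cut_weight A w X (V - X) \<le> mac V A w"
proof -
  have "finite V" using wd unfolding weighted_digraph_def by auto
  thus ?thesis unfolding mac_def using X by (intro Max_ge) auto
qed

lemma mac_nonneg:
  assumes wd: "weighted_digraph V A w"
  shows "0 \<le> mac V A w"
proof -
  have "0 \<le> cut_weight A w {} (V - {})" unfolding cut_weight_def
    using wd unfolding weighted_digraph_def by (intro sum_nonneg) auto
  thus ?thesis using mac_ge[OF wd, of "{}"] by simp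
qed

lemma cut_eq:
  assumes AV: "A \<subseteq> V \<times> V" and fA: "finite A"
  shows "cut_weight A w {v\<in>V. c v \<in> S} (V - {v\<in>V. c v \<in> S})
     = (\<Sum>e\<in>A. if c (fst e) \<in> S \<and> c (snd e) \<notin> S then w e else 0)"
proof -
  have "{(x, y)\<in>A. x \<in> {v\<in>V. c v \<in> S} \<and> y \<in> V - {v\<in>V. c v \<in> S}}
      = {e\<in>A. c (fst e) \<in> S \<and> c (snd e) \<notin> S}" using AV by auto
  thus ?thesis unfolding cut_weight_def by (simp only: sum.inter_filter[OF fA])
qed

lemma mac_bound:
  assumes wd: "weighted_digraph V A w"
    and n2: "2 \<le> longest_path_order V A" and s1: "1 \<le> s" and sn: "s < longest_path_order V A"
  shows "real s * real (longest_path_order V A - s) * total_weight A w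
     \<le> real (longest_path_order V A) * real (longest_path_order V A - 1) * mac V A w"
proof -
  define n where "n = longest_path_order V A"
  have fV: "finite V" and AV: "A \<subseteq> V \<times> V" using wd unfolding weighted_digraph_def by auto
  have fA: "finite A" using fV AV finite_subset by blast
  obtain c where c: "\<forall>v\<in>V. c v \<in> {1..n}" "\<forall>(u,v)\<in>A. c u \<noteq> c v"
    using coloring[OF wd] unfolding n_def by blast
  have "real ((card {1..n} - 2) choose (s-1)) * (\<Sum>e\<in>A. w e) \<le> real ((card {1..n}) choose s) * mac V A w"
  proof (rule avg[OF fA, of "{1..n}" "\<lambda>e. c (fst e)" "\<lambda>e. c (snd e)"])
    fix e assume "e \<in> A"
    thus "c (fst e) \<in> {1..n} \<and> c (snd e) \<in> {1..n} \<and> c (fst e) \<noteq> c (snd e)"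
      using c AV by (cases e) auto
  next
    fix S assume "S \<subseteq> {1..n}" "card S = s"
    show "(\<Sum>e\<in>A. if c (fst e) \<in> S \<and> c (snd e) \<notin> S then w e else 0) \<le> mac V A w"
      using mac_ge[OF wd, of "{v\<in>V. c v \<in> S}"] cut_eq[OF AV fA, where c=c and S=S and w=w] by simp
  qed (use s1 in auto)
  hence ineq: "real ((n - 2) choose (s-1)) * total_weight A w \<le> real (n choose s) * mac V A w"
    by (simp add: total_weight_def)
  have bid: "real ((n - 2) choose (s - 1)) * real n * real (n - 1) = real (n choose s) * real s * real (n - s)"
    using binom_id[OF s1 sn[folded n_def]] by (metis of_nat_mult)
  have pos: "0 < real (n choose s)" using sn n_def by simp
  have "real (n choose s) * (real s * real (n - s) * total_weight A w)
      = real n * real (n - 1) * (real ((n - 2) choose (s-1)) * total_weight A w)"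
    using bid by (simp add: algebra_simps)
  also have "\<dots> \<le> real n * real (n - 1) * (real (n choose s) * mac V A w)"
    using ineq by (intro mult_left_mono) auto
  also have "\<dots> = real (n choose s) * (real n * real (n - 1) * mac V A w)" by (simp add: algebra_simps)
  finally show ?thesis using pos unfolding n_def by simp
qed


lemma div_helper: "(0::real) < d \<Longrightarrow> a * W \<le> d * M \<Longrightarrow> a / d * W \<le> M"
  by (simp add: divide_le_eq mult.commute)

theorem mainTheorem3:
  fixes V :: "'a set" and A :: "('a \<times> 'a) set" and w :: "'a \<times> 'a \<Rightarrow> real"
  assumes "weighted_digraph V A w" and "V \<noteq> {}"
  defines "\<nu> \<equiv> longest_path_order V A"
  shows "(odd \<nu> \<longrightarrow> mac V A w \<ge> (1/4 + 1 / (4 * real \<nu>)) * total_weight A w)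
       \<and> (even \<nu> \<longrightarrow> mac V A w \<ge> (1/4 + 1 / (4 * (real \<nu> - 1))) * total_weight A w)"
proof -
  note wd = assms(1)
  have fV: "finite V" and AV: "A \<subseteq> V \<times> V" and wn: "\<forall>a\<in>A. w a \<ge> 0"
    using wd unfolding weighted_digraph_def by auto
  obtain v where v: "v \<in> V" using assms(2) by blast
  have "dipath V A [v]" using v unfolding dipath_def by auto
  hence n1: "1 \<le> \<nu>" unfolding \<nu>_def longest_path_order_def
    using finite_dipaths[OF fV, of A] by (metis Max_ge finite_imageI image_eqI list.size(3,4) One_nat_def add_0 mem_Collect_eq)
  have W0: "0 \<le> total_weight A w" unfolding total_weight_def using wn by (intro sum_nonneg) auto
  have M0: "0 \<le> mac V A w" by (rule mac_nonneg[OF wd])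
  let ?W = "total_weight A w" and ?M = "mac V A w"
  show ?thesis
  proof (intro conjI impI)
    assume od: "odd \<nu>"
    then obtain m where m: "\<nu> = 2*m+1" by (metis oddE)
    show "(1/4 + 1 / (4 * real \<nu>)) * ?W \<le> ?M"
    proof (cases "m = 0")
      case True
      hence "\<nu> = 1" using m by simp
      obtain c where c: "\<forall>v\<in>V. c v \<in> {1..\<nu>}" "\<forall>(u,v)\<in>A. c u \<noteq> c v"
        using coloring[OF wd] unfolding \<nu>_def by blast
      have "A = {}"
      proof (rule ccontr)
        assume "A \<noteq> {}"
        then obtain a b where ab: "(a,b) \<in> A" by auto
        hence "c a = 1" "c b = 1" using c(1) AV \<open>\<nu> = 1\<close> by auto
        thus False using c(2) ab by auto
      qed
      thus ?thesis using M0 by (simp add: total_weight_def)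
    next
      case False
      have b: "real m * real (\<nu> - m) * ?W \<le> real \<nu> * real (\<nu> - 1) * ?M"
        using mac_bound[OF wd, of m] False m unfolding \<nu>_def by simp
      hence "real m * (real m + 1) * ?W \<le> real m * (2 * (2*real m+1) * ?M)"
        using m by (simp add: algebra_simps)
      hence "(real m + 1) * ?W \<le> 2 * (2*real m+1) * ?M" using False by simp
      moreover have "(1/4 + 1 / (4 * real \<nu>)) = (real m + 1) / (2 * (2 * real m + 1))"
        using m by (simp add: field_simps)
      moreover have "0 < 2 * (2 * real m + 1)" by simp
      ultimately show ?thesis using div_helper by metis
    qed
  next
    assume ev: "even \<nu>"
    then obtain m where m: "\<nu> = 2*m" by (metis evenE)
    have m1: "m \<ge> 1" using m n1 by simp
    have "real m * real (\<nu> - m) * ?W \<le> real \<nu> * real (\<nu> - 1) * ?M"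
      using mac_bound[OF wd, of m] m1 m unfolding \<nu>_def by simp
    hence "real m * real m * ?W \<le> real m * (2 * (2*real m-1) * ?M)"
      using m m1 by (simp add: algebra_simps of_nat_diff)
    hence "real m * ?W \<le> 2 * (2*real m-1) * ?M" using m1 by simp
    moreover have "(1/4 + 1 / (4 * (real \<nu> - 1))) = real m / (2 * (2 * real m - 1))"
      using m m1 by (simp add: field_simps)
    moreover have "0 < 2 * real m - 1" using m1 by simp
    ultimately show "(1/4 + 1 / (4 * (real \<nu> - 1))) * ?W \<le> ?M"
      using div_helper[of "2 * (2 * real m - 1)" "real m" ?W ?M] by simp
  qed
qed

end
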